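(* Every bi-nested sequent that is provable in the calculus $\mathbf{C}_{\mathbf{IK}}$ is valid, i.e. if $S$ is provable in $\mathbf{C}_{\mathbf{IK}}$ then for every bi-relational model $\mathcal{M}=(W,\le,R,V)$ and every $w\in W$ we have $\mathcal{M},w\Vdash S$.
   Context: Formulas are generated by $A::=p\mid\bot\mid\top\mid A\wedge A\mid A\vee A\mid A\supset A\mid\Box A\mid\Diamond A$, with $p$ ranging over a countable set $\mathsf{At}$ of atoms. A bi-relational model is $\mathcal{M}=(W,\le,R,V)$ with $W\neq\emptyset$, $\le$ a reflexive transitive relation on $W$, $R$ a binary relation on $W$, and $V:W\to\wp(\mathsf{At})$ such that $x\le y$ implies $V(x)\subseteq V(y)$; moreover (FC) if $x\le x'$ and $xRz$ then there is $z'$ with $x'Rz'$ and $z\le z'$; (BC) if $xRz$ and $z\le z'$ then there is $x'$ with $x\le x'$ and $x'Rz'$. Forcing: $w\not\Vdash\bot$, $w\Vdash\top$, $w\Vdash p$ iff $p\in V(w)$; $\wedge,\vee$ pointwise; $w\Vdash B\supset C$ iff for all $w'\ge w$, $w'\Vdash B$ implies $w'\Vdash C$; $w\Vdash\Box B$ iff for all $w',v'$ with $w\le w'$ and $w'Rv'$, $v'\Vdash B$; $w\Vdash\Diamond B$ iff there is $v$ with $wRv$ and $v\Vdash B$. Bi-nested sequents: the empty sequent $\Rightarrow$ is one; if $\Gamma,\Delta'$ are finite multisets of formulas and $S_1,\dots,S_m,T_1,\dots,T_n$ ($m,n\ge0$) are bi-nested sequents then $\Gamma\Rightarrow\Delta',\langle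 S_1\rangle,\dots,\langle S_m\rangle,[T_1],\dots,[T_n]$ is one. $\langle S\rangle$ is an implication block, $[T]$ a modal block; $\Gamma$ is the antecedent, the rest the consequent. Forcing is extended: $x\not\Vdash(\Rightarrow)$; $x\Vdash[T]$ iff $y\Vdash T$ for all $y$ with $xRy$; $x\Vdash\langle T\rangle$ iff $x'\Vdash T$ for all $x'\ge x$; $x\Vdash\Gamma\Rightarrow\Delta$ iff $x\not\Vdash A$ for some $A\in\Gamma$ or $x\Vdash\mathcal{O}$ for some formula or block $\mathcal{O}\in\Delta$. A sequent is valid if it is forced at every world of every bi-relational model. A context $G\{\ \}$ is either the hole $\{\ \}$, or $\Gamma\Rightarrow\Delta,\langle G'\{\ \}\rangle$, or $\Gamma\Rightarrow\Delta,[G'\{\ \}]$ for a sequent $\Gamma\Rightarrow\Delta$ and context $G'\{\ \}$; $G\{S\}$ is the result of filling the hole with $S$. For the consequent $\Delta$ of a sequent, its local positive part $\Delta^*$ is: $\emptyset$ if $\Delta$ contains no modal block; and if $\Delta=\Delta_0,[\Lambda_1\Rightarrow\Theta_1],\dots,[\Lambda_k\Rightarrow\Theta_k]$ with $\Delta_0$ free of modal blocks, then $\Delta^*=[\Lambda_1\Rightarrow\Theta_1^*],\dots,[\Lambda_k\Rightarrow\Theta_k^*]$. The calculus $\mathbf{C}_{\mathbf{IK}}$ (premisses / conclusion; $\Gamma,\Gamma',\Delta,\Sigma,\Pi,\Lambda,\Theta$ multisets): axioms $G\{\Gamma,\bot\Rightarrow\Delta\}$, $G\{\Gamma\Rightarrow\top,\Delta\}$,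 $G\{\Gamma,p\Rightarrow\Delta,p\}$ ($p$ atomic); $(\wedge_L)$ $G\{A,B,\Gamma\Rightarrow\Delta\}$ / $G\{A\wedge B,\Gamma\Rightarrow\Delta\}$; $(\wedge_R)$ $G\{\Gamma\Rightarrow\Delta,A\}$, $G\{\Gamma\Rightarrow\Delta,B\}$ / $G\{\Gamma\Rightarrow\Delta,A\wedge B\}$; $(\vee_L)$ $G\{\Gamma,A\Rightarrow\Delta\}$, $G\{\Gamma,B\Rightarrow\Delta\}$ / $G\{\Gamma,A\vee B\Rightarrow\Delta\}$; $(\vee_R)$ $G\{\Gamma\Rightarrow\Delta,A,B\}$ / $G\{\Gamma\Rightarrow\Delta,A\vee B\}$; $(\supset_L)$ $G\{\Gamma,A\supset B\Rightarrow A,\Delta\}$, $G\{\Gamma,B\Rightarrow\Delta\}$ / $G\{\Gamma,A\supset B\Rightarrow\Delta\}$; $(\supset_R)$ $G\{\Gamma\Rightarrow\Delta,\langle A\Rightarrow B\rangle\}$ / $G\{\Gamma\Rightarrow\Delta,A\supset B\}$; $(\Box_L)$ $G\{\Gamma,\Box A\Rightarrow\Delta,[\Sigma,A\Rightarrow\Pi]\}$ / $G\{\Gamma,\Box A\Rightarrow\Delta,[\Sigma\Rightarrow\Pi]\}$; $(\Box_R)$ $G\{\Gamma\Rightarrow\Delta,\langle\,\Rightarrow[\,\Rightarrow A]\rangle\}$ / $G\{\Gamma\Rightarrow\Delta,\Box A\}$; $(\Diamond_L)$ $G\{\Gamma\Rightarrow\Delta,[A\Rightarrow\,]\}$ / $G\{\Gamma,\Diamond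 A\Rightarrow\Delta\}$; $(\Diamond_R)$ $G\{\Gamma\Rightarrow\Delta,\Diamond A,[\Sigma\Rightarrow\Pi,A]\}$ / $G\{\Gamma\Rightarrow\Delta,\Diamond A,[\Sigma\Rightarrow\Pi]\}$; (trans) $G\{\Gamma,\Gamma'\Rightarrow\Delta,\langle\Gamma',\Sigma\Rightarrow\Pi\rangle\}$ / $G\{\Gamma,\Gamma'\Rightarrow\Delta,\langle\Sigma\Rightarrow\Pi\rangle\}$; $(\mathrm{inter}_{fc})$ $G\{\Gamma\Rightarrow\Delta,\langle\Sigma\Rightarrow\Pi,[\Lambda\Rightarrow\Theta^*]\rangle,[\Lambda\Rightarrow\Theta]\}$ / $G\{\Gamma\Rightarrow\Delta,\langle\Sigma\Rightarrow\Pi\rangle,[\Lambda\Rightarrow\Theta]\}$; $(\mathrm{inter}_{bc})$ $G\{\Gamma\Rightarrow\Delta,[\Lambda\Rightarrow\Theta,\langle\Sigma\Rightarrow\Pi\rangle],\langle\,\Rightarrow[\Sigma\Rightarrow\Pi]\rangle\}$ / $G\{\Gamma\Rightarrow\Delta,[\Lambda\Rightarrow\Theta,\langle\Sigma\Rightarrow\Pi\rangle]\}$. A proof of $S$ is a finite tree of sequents built with these rules, with root $S$ and all leaves axioms; a formula $A$ is provable if $\Rightarrow A$ is. *)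

theory Defs
  imports Main "HOL-Library.Multiset"
begin

datatype 'a fm = At 'a | Bot | Top | And "'a fm" "'a fm" | Or "'a fm" "'a fm"
  | Imp "'a fm" "'a fm" | Box "'a fm" | Dia "'a fm"

text \<open>Seq G D I B represents  G \<Rightarrow> D, \<langle>I\<rangle>, [B]  : antecedent G (multiset of formulas),
 consequent formed by the formulas D, the implication blocks (one per element of I)
 and the modal blocks (one per element of B).\<close>

datatype 'a seq = Seq "'a fm multiset" "'a fm multiset" "'a seq multiset" "'a seq multiset"

definition bimodel :: "'w set \<Rightarrow> ('w \<Rightarrow> 'w \<Rightarrow> bool) \<Rightarrow> ('w \<Rightarrow> 'w \<Rightarrow> bool) \<Rightarrow> ('w \<Rightarrow> 'a set) \<Rightarrow> bool" where
  "bimodel W le R V \<longleftrightarrow>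
     W \<noteq> {} \<and>
     (\<forall>x y. le x y \<longrightarrow> x \<in> W \<and> y \<in> W) \<and>
     (\<forall>x y. R x y \<longrightarrow> x \<in> W \<and> y \<in> W) \<and>
     (\<forall>x\<in>W. le x x) \<and>
     (\<forall>x y z. le x y \<longrightarrow> le y z \<longrightarrow> le x z) \<and>
     (\<forall>x y. le x y \<longrightarrow> V x \<subseteq> V y) \<and>
     (\<forall>x x' z. le x x' \<longrightarrow> R x z \<longrightarrow> (\<exists>z'. R x' z' \<and> le z z')) \<and>
     (\<forall>x z z'. R x z \<longrightarrow> le z z' \<longrightarrow> (\<exists>x'. le x x' \<and> R x' z'))"

fun forces :: "('w \<Rightarrow> 'w \<Rightarrow> bool) \<Rightarrow> ('w \<Rightarrow> 'w \<Rightarrow> bool) \<Rightarrow> ('w \<Rightarrow> 'a set) \<Rightarrow> 'w \<Rightarrow> 'a fm \<Rightarrow> bool" where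
  "forces le R V w (At p) = (p \<in> V w)"
| "forces le R V w Bot = False"
| "forces le R V w Top = True"
| "forces le R V w (And A B) = (forces le R V w A \<and> forces le R V w B)"
| "forces le R V w (Or A B) = (forces le R V w A \<or> forces le R V w B)"
| "forces le R V w (Imp A B) = (\<forall>w'. le w w' \<longrightarrow> forces le R V w' A \<longrightarrow> forces le R V w' B)"
| "forces le R V w (Box A) = (\<forall>w' v'. le w w' \<longrightarrow> R w' v' \<longrightarrow> forces le R V v' A)"
| "forces le R V w (Dia A) = (\<exists>v. R w v \<and> forces le R V v A)"

primrec forces_seq :: "('w \<Rightarrow> 'w \<Rightarrow> bool) \<Rightarrow> ('w \<Rightarrow> 'w \<Rightarrow> bool) \<Rightarrow> ('w \<Rightarrow> 'a set) \<Rightarrow> 'a seq \<Rightarrow> 'w \<Rightarrow> bool" where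
  "forces_seq le R V (Seq G D I B) = (\<lambda>x.
     (\<exists>A\<in>#G. \<not> forces le R V x A) \<or>
     (\<exists>A\<in>#D. forces le R V x A) \<or>
     (\<exists>f\<in>#image_mset (forces_seq le R V) I. \<forall>x'. le x x' \<longrightarrow> f x') \<or>
     (\<exists>f\<in>#image_mset (forces_seq le R V) B. \<forall>y. R x y \<longrightarrow> f y))"

datatype 'a ctx = Hole
  | CImp "'a fm multiset" "'a fm multiset" "'a seq multiset" "'a seq multiset" "'a ctx"
  | CBox "'a fm multiset" "'a fm multiset" "'a seq multiset" "'a seq multiset" "'a ctx"

primrec fill :: "'a ctx \<Rightarrow> 'a seq \<Rightarrow> 'a seq" where
  "fill Hole S = S"
| "fill (CImp G D I B C) S = Seq G D (add_mset (fill C S) I) B"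
| "fill (CBox G D I B C) S = Seq G D I (add_mset (fill C S) B)"

text \<open>Local positive part: star_seq (\<Lambda> \<Rightarrow> \<Theta>) = (\<Lambda> \<Rightarrow> \<Theta>*).\<close>

primrec star_seq :: "'a seq \<Rightarrow> 'a seq" where
  "star_seq (Seq L D I B) = Seq L {#} {#} (image_mset star_seq B)"

inductive provable :: "'a seq \<Rightarrow> bool" where
  ax_bot: "provable (fill C (Seq (add_mset Bot G) D I B))"
| ax_top: "provable (fill C (Seq G (add_mset Top D) I B))"
| ax_at: "provable (fill C (Seq (add_mset (At p) G) (add_mset (At p) D) I B))"
| andL: "provable (fill C (Seq (add_mset A (add_mset A' G)) D I B))
    \<Longrightarrow> provable (fill C (Seq (add_mset (And A A') G) D I B))"
| andR: "provable (fill C (Seq G (add_mset A D) I B))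
    \<Longrightarrow> provable (fill C (Seq G (add_mset A' D) I B))
    \<Longrightarrow> provable (fill C (Seq G (add_mset (And A A') D) I B))"
| orL: "provable (fill C (Seq (add_mset A G) D I B))
    \<Longrightarrow> provable (fill C (Seq (add_mset A' G) D I B))
    \<Longrightarrow> provable (fill C (Seq (add_mset (Or A A') G) D I B))"
| orR: "provable (fill C (Seq G (add_mset A (add_mset A' D)) I B))
    \<Longrightarrow> provable (fill C (Seq G (add_mset (Or A A') D) I B))"
| impL: "provable (fill C (Seq (add_mset (Imp A A') G) (add_mset A D) I B))
    \<Longrightarrow> provable (fill C (Seq (add_mset A' G) D I B))
    \<Longrightarrow> provable (fill C (Seq (add_mset (Imp A A') G) D I B))"
| impR: "provable (fill C (Seq G D (add_mset (Seq {#A#} {#A'#} {#} {#}) I) B))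
    \<Longrightarrow> provable (fill C (Seq G (add_mset (Imp A A') D) I B))"
| boxL: "provable (fill C (Seq (add_mset (Box A) G) D I (add_mset (Seq (add_mset A S) P PI PB) B)))
    \<Longrightarrow> provable (fill C (Seq (add_mset (Box A) G) D I (add_mset (Seq S P PI PB) B)))"
| boxR: "provable (fill C (Seq G D (add_mset (Seq {#} {#} {#} {# Seq {#} {#A#} {#} {#} #}) I) B))
    \<Longrightarrow> provable (fill C (Seq G (add_mset (Box A) D) I B))"
| diaL: "provable (fill C (Seq G D I (add_mset (Seq {#A#} {#} {#} {#}) B)))
    \<Longrightarrow> provable (fill C (Seq (add_mset (Dia A) G) D I B))"
| diaR: "provable (fill C (Seq G (add_mset (Dia A) D) I (add_mset (Seq S (add_mset A P) PI PB) B)))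
    \<Longrightarrow> provable (fill C (Seq G (add_mset (Dia A) D) I (add_mset (Seq S P PI PB) B)))"
| trans: "provable (fill C (Seq (G + G') D (add_mset (Seq (G' + S) P PI PB) I) B))
    \<Longrightarrow> provable (fill C (Seq (G + G') D (add_mset (Seq S P PI PB) I) B))"
| inter_fc: "provable (fill C (Seq G D (add_mset (Seq S P PI (add_mset (star_seq T) PB)) I) (add_mset T B)))
    \<Longrightarrow> provable (fill C (Seq G D (add_mset (Seq S P PI PB) I) (add_mset T B)))"
| inter_bc: "provable (fill C (Seq G D (add_mset (Seq {#} {#} {#} {#Seq S P PI PB#}) I)
                                (add_mset (Seq L TD (add_mset (Seq S P PI PB) TI) TB) B)))
    \<Longrightarrow> provable (fill C (Seq G D I (add_mset (Seq L TD (add_mset (Seq S P PI PB) TI) TB) B)))"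

end

theory Submission
  imports Defs
begin

context
  fixes W :: "'w set" and le R :: "'w \<Rightarrow> 'w \<Rightarrow> bool" and V :: "'w \<Rightarrow> 'a set"
  assumes bm: "bimodel W le R V"
begin

lemma leW: "le x y \<Longrightarrow> x \<in> W \<and> y \<in> W" using bm unfolding bimodel_def by blast
lemma RW: "R x y \<Longrightarrow> x \<in> W \<and> y \<in> W" using bm unfolding bimodel_def by blast
lemma refl: "x \<in> W \<Longrightarrow> le x x" using bm unfolding bimodel_def by blast
lemma tr: "le x y \<Longrightarrow> le y z \<Longrightarrow> le x z" using bm unfolding bimodel_def by blast
lemma Vmono: "le x y \<Longrightarrow> V x \<subseteq> V y" using bm unfolding bimodel_def by blast
lemma FC: "le x x' \<Longrightarrow> R x z \<Longrightarrow> \<exists>z'. R x' z' \<and> le z z'" using bm unfolding bimodel_def by blast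
lemma BC: "R x z \<Longrightarrow> le z z' \<Longrightarrow> \<exists>x'. le x x' \<and> R x' z'" using bm unfolding bimodel_def by blast

lemma persist: "le x y \<Longrightarrow> forces le R V x (A::'a fm) \<Longrightarrow> forces le R V y A"
proof (induction A arbitrary: x y)
  case (At p) then show ?case using Vmono by auto
next
  case (Imp A1 A2) then show ?case using tr by auto
next
  case (Box A) then show ?case by simp (meson tr)
next
  case (Dia A) then show ?case using FC by fastforce
qed auto

lemma star_back: "le y z \<Longrightarrow> forces_seq le R V (star_seq T) z \<Longrightarrow> forces_seq le R V (T::'a seq) y"
proof (induction T arbitrary: y z)
  case (Seq L D I B)
  show ?case
  proof (cases "\<exists>A\<in>#L. \<not> forces le R V y A")
    case True then show ?thesis by auto
  next
    case False
    then have "\<forall>A\<in>#L. forces le R V z A" using persist Seq.prems(1) by blast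
    then obtain T' where T': "T' \<in># B" "\<forall>u. R z u \<longrightarrow> forces_seq le R V (star_seq T') u"
      using Seq.prems(2) by auto
    have "\<forall>u. R y u \<longrightarrow> forces_seq le R V T' u"
    proof (intro allI impI)
      fix u assume "R y u"
      then obtain u' where "R z u'" "le u u'" using FC Seq.prems(1) by blast
      then show "forces_seq le R V T' u" using Seq.IH(2)[OF T'(1)] T'(2) by blast
    qed
    then show ?thesis using T'(1) by auto
  qed
qed

lemma fill_mono: "\<forall>x\<in>W. forces_seq le R V S1 x \<longrightarrow> forces_seq le R V S2 x \<Longrightarrow>
   \<forall>x\<in>W. forces_seq le R V (fill C S1) x \<longrightarrow> forces_seq le R V (fill C S2) x"
proof (induction C)
  case Hole then show ?case by simp
next
  case (CImp G D I B C)
  then have IH: "\<forall>x\<in>W. forces_seq le R V (fill C S1) x \<longrightarrow> forces_seq le R V (fill C S2) x" by blast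
  show ?case
  proof (intro ballI impI)
    fix x assume x: "x \<in> W" and h: "forces_seq le R V (fill (CImp G D I B C) S1) x"
    show "forces_seq le R V (fill (CImp G D I B C) S2) x"
    proof (cases "\<forall>x'. le x x' \<longrightarrow> forces_seq le R V (fill C S1) x'")
      case True
      then have "\<forall>x'. le x x' \<longrightarrow> forces_seq le R V (fill C S2) x'" using IH leW by blast
      then show ?thesis by simp
    next
      case False
      then show ?thesis using h by auto
    qed
  qed
next
  case (CBox G D I B C)
  then have IH: "\<forall>x\<in>W. forces_seq le R V (fill C S1) x \<longrightarrow> forces_seq le R V (fill C S2) x" by blast
  show ?case
  proof (intro ballI impI)
    fix x assume x: "x \<in> W" and h: "forces_seq le R V (fill (CBox G D I B C) S1) x"
    show "forces_seq le R V (fill (CBox G D I B C) S2) x"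
    proof (cases "\<forall>x'. R x x' \<longrightarrow> forces_seq le R V (fill C S1) x'")
      case True
      then have "\<forall>x'. R x x' \<longrightarrow> forces_seq le R V (fill C S2) x'" using IH RW by blast
      then show ?thesis by simp
    next
      case False
      then show ?thesis using h by auto
    qed
  qed
qed

lemma fs_addI: "forces_seq le R V (Seq G D (add_mset X I) B) x \<longleftrightarrow>
  (\<forall>x'. le x x' \<longrightarrow> forces_seq le R V X x') \<or> forces_seq le R V (Seq G D I B) x" by auto

lemma fs_empty: "forces_seq le R V (Seq {#} {#} {#} {#}) x = False" by simp

lemma fs_addB: "forces_seq le R V (Seq G D I (add_mset X B)) x \<longleftrightarrow>
  (\<forall>y. R x y \<longrightarrow> forces_seq le R V X y) \<or> forces_seq le R V (Seq G D I B) x" by auto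

lemma fill_valid: "\<forall>x\<in>W. forces_seq le R V S x \<Longrightarrow> \<forall>x\<in>W. forces_seq le R V (fill C S) x"
proof (induction C)
  case Hole then show ?case by simp
next
  case (CImp G D I B C) then show ?case using leW by auto
next
  case (CBox G D I B C) then show ?case using RW by auto
qed

lemma fill_mono2: "\<forall>x\<in>W. forces_seq le R V S1 x \<longrightarrow> forces_seq le R V S2 x \<longrightarrow> forces_seq le R V S3 x \<Longrightarrow>
   \<forall>x\<in>W. forces_seq le R V (fill C S1) x \<longrightarrow> forces_seq le R V (fill C S2) x \<longrightarrow> forces_seq le R V (fill C S3) x"
proof (induction C)
  case Hole then show ?case by simp
next
  case (CImp G D I B C)
  then have IH: "\<forall>x\<in>W. forces_seq le R V (fill C S1) x \<longrightarrow> forces_seq le R V (fill C S2) x \<longrightarrow> forces_seq le R V (fill C S3) x" by blast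
  show ?case
  proof (intro ballI impI)
    fix x assume x: "x \<in> W" and h: "forces_seq le R V (fill (CImp G D I B C) S1) x"
      and h2: "forces_seq le R V (fill (CImp G D I B C) S2) x"
    show "forces_seq le R V (fill (CImp G D I B C) S3) x"
    proof (cases "\<forall>x'. le x x' \<longrightarrow> forces_seq le R V (fill C S1) x'")
      case True
      note T1 = True
      show ?thesis
      proof (cases "\<forall>x'. le x x' \<longrightarrow> forces_seq le R V (fill C S2) x'")
        case True
        then have "\<forall>x'. le x x' \<longrightarrow> forces_seq le R V (fill C S3) x'" using T1 IH leW by blast
        then show ?thesis by simp
      next
        case False then show ?thesis using h2 by auto
      qed
    next
      case False
      then show ?thesis using h by auto
    qed
  qed
next
  case (CBox G D I B C)
  then have IH: "\<forall>x\<in>W. forces_seq le R V (fill C S1) x \<longrightarrow> forces_seq le R V (fill C S2) x \<longrightarrow> forces_seq le R V (fill C S3) x" by blast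
  show ?case
  proof (intro ballI impI)
    fix x assume x: "x \<in> W" and h: "forces_seq le R V (fill (CBox G D I B C) S1) x"
      and h2: "forces_seq le R V (fill (CBox G D I B C) S2) x"
    show "forces_seq le R V (fill (CBox G D I B C) S3) x"
    proof (cases "\<forall>x'. R x x' \<longrightarrow> forces_seq le R V (fill C S1) x'")
      case True
      note T1 = True
      show ?thesis
      proof (cases "\<forall>x'. R x x' \<longrightarrow> forces_seq le R V (fill C S2) x'")
        case True
        then have "\<forall>x'. R x x' \<longrightarrow> forces_seq le R V (fill C S3) x'" using T1 IH RW by blast
        then show ?thesis by simp
      next
        case False then show ?thesis using h2 by auto
      qed
    next
      case False
      then show ?thesis using h by auto
    qed
  qed
qed

lemma step1: "\<forall>x\<in>W. forces_seq le R V S1 x \<longrightarrow> forces_seq le R V S2 x \<Longrightarrow>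
   \<forall>x\<in>W. forces_seq le R V (fill C S1) x \<Longrightarrow> \<forall>x\<in>W. forces_seq le R V (fill C S2) x"
  using fill_mono by blast

lemma step2: "\<forall>x\<in>W. forces_seq le R V S1 x \<longrightarrow> forces_seq le R V S2 x \<longrightarrow> forces_seq le R V S3 x \<Longrightarrow>
   \<forall>x\<in>W. forces_seq le R V (fill C S1) x \<Longrightarrow> \<forall>x\<in>W. forces_seq le R V (fill C S2) x \<Longrightarrow>
   \<forall>x\<in>W. forces_seq le R V (fill C S3) x"
  using fill_mono2 by blast

lemma sound: "provable S \<Longrightarrow> \<forall>x\<in>W. forces_seq le R V S x"
proof (induction S rule: provable.induct)
  case (ax_bot C G D I B) then show ?case by (intro fill_valid) simp
next
  case (ax_top C G D I B) then show ?case by (intro fill_valid) simp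
next
  case (ax_at C p G D I B) then show ?case by (intro fill_valid) simp
next
  case (andL C A A' G D I B) show ?case by (rule step1[OF _ andL.IH]) auto
next
  case (andR C G A D I B A') show ?case
    by (rule step2[OF _ andR.IH(1) andR.IH(2)]) auto
next
  case (orL C A G D I B A') show ?case
    by (rule step2[OF _ orL.IH(1) orL.IH(2)]) auto
next
  case (orR C G A A' D I B) show ?case by (rule step1[OF _ orR.IH]) auto
next
  case (impL C A A' G D I B) show ?case
    by (rule step2[OF _ impL.IH(1) impL.IH(2)]) (auto dest: refl)
next
  case (impR C G D A A' I B) show ?case by (rule step1[OF _ impR.IH]) auto
next
  case (boxL C A G D S P PI PB I B) show ?case by (rule step1[OF _ boxL.IH]) (simp, blast dest: refl)
next
  case (boxR C G D A I B) show ?case by (rule step1[OF _ boxR.IH]) auto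
next
  case (diaL C G D I A B) show ?case by (rule step1[OF _ diaL.IH]) auto
next
  case (diaR C G A D I S P PI PB B) show ?case by (rule step1[OF _ diaR.IH]) auto
next
  case (trans C G G' D S P PI PB I B)
  have "\<forall>x\<in>W. forces_seq le R V (Seq (G + G') D (add_mset (Seq (G' + S) P PI PB) I) B) x
     \<longrightarrow> forces_seq le R V (Seq (G + G') D (add_mset (Seq S P PI PB) I) B) x"
  proof (intro ballI impI)
    fix x assume x: "x \<in> W" and h: "forces_seq le R V (Seq (G + G') D (add_mset (Seq (G' + S) P PI PB) I) B) x"
    show "forces_seq le R V (Seq (G + G') D (add_mset (Seq S P PI PB) I) B) x"
    proof (cases "\<forall>A\<in>#G'. forces le R V x A")
      case False then show ?thesis by auto
    next
      case G': True
      show ?thesis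
      proof (cases "\<forall>x'. le x x' \<longrightarrow> forces_seq le R V (Seq (G' + S) P PI PB) x'")
        case True
        have "\<forall>x'. le x x' \<longrightarrow> forces_seq le R V (Seq S P PI PB) x'"
        proof (intro allI impI)
          fix x' assume xx: "le x x'"
          have "\<forall>A\<in>#G'. forces le R V x' A" using G' persist xx by blast
          moreover have "forces_seq le R V (Seq (G' + S) P PI PB) x'" using True xx by blast
          ultimately show "forces_seq le R V (Seq S P PI PB) x'" by auto
        qed
        then show ?thesis by simp
      next
        case False
        then show ?thesis using h unfolding fs_addI by blast
      qed
    qed
  qed
  then show ?case by (rule step1[OF _ trans.IH])
next
  case (inter_fc C G D S P PI T PB I B)
  have "\<forall>x\<in>W. forces_seq le R V (Seq G D (add_mset (Seq S P PI (add_mset (star_seq T) PB)) I) (add_mset T B)) x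
     \<longrightarrow> forces_seq le R V (Seq G D (add_mset (Seq S P PI PB) I) (add_mset T B)) x"
  proof (intro ballI impI)
    fix x assume x: "x \<in> W" and h: "forces_seq le R V (Seq G D (add_mset (Seq S P PI (add_mset (star_seq T) PB)) I) (add_mset T B)) x"
    show "forces_seq le R V (Seq G D (add_mset (Seq S P PI PB) I) (add_mset T B)) x"
    proof (cases "\<forall>y. R x y \<longrightarrow> forces_seq le R V T y")
      case True then show ?thesis by simp
    next
      case False
      then obtain y where y: "R x y" "\<not> forces_seq le R V T y" by blast
      show ?thesis
      proof (cases "\<forall>x'. le x x' \<longrightarrow> forces_seq le R V (Seq S P PI (add_mset (star_seq T) PB)) x'")
        case True
        have "\<forall>x'. le x x' \<longrightarrow> forces_seq le R V (Seq S P PI PB) x'"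
        proof (intro allI impI)
          fix x' assume xx: "le x x'"
          have nz: "\<not> (\<forall>z. R x' z \<longrightarrow> forces_seq le R V (star_seq T) z)"
          proof
            assume a: "\<forall>z. R x' z \<longrightarrow> forces_seq le R V (star_seq T) z"
            obtain z where "R x' z" "le y z" using FC[OF xx y(1)] by blast
            then show False using a star_back y(2) by blast
          qed
          show "forces_seq le R V (Seq S P PI PB) x'" using True xx nz by auto
        qed
        then show ?thesis by simp
      next
        case False
        then show ?thesis using h unfolding fs_addI fs_addB by blast
      qed
    qed
  qed
  then show ?case by (rule step1[OF _ inter_fc.IH])
next
  case (inter_bc C G D S P PI PB I L TD TI TB B)
  have "\<forall>x\<in>W. forces_seq le R V (Seq G D (add_mset (Seq {#} {#} {#} {#Seq S P PI PB#}) I)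
                                (add_mset (Seq L TD (add_mset (Seq S P PI PB) TI) TB) B)) x
     \<longrightarrow> forces_seq le R V (Seq G D I (add_mset (Seq L TD (add_mset (Seq S P PI PB) TI) TB) B)) x"
  proof (intro ballI impI)
    fix x assume x: "x \<in> W" and h: "forces_seq le R V (Seq G D (add_mset (Seq {#} {#} {#} {#Seq S P PI PB#}) I)
                                (add_mset (Seq L TD (add_mset (Seq S P PI PB) TI) TB) B)) x"
    show "forces_seq le R V (Seq G D I (add_mset (Seq L TD (add_mset (Seq S P PI PB) TI) TB) B)) x"
    proof (cases "\<forall>x'. le x x' \<longrightarrow> (\<forall>z. R x' z \<longrightarrow> forces_seq le R V (Seq S P PI PB) z)")
      case True
      have "\<forall>y. R x y \<longrightarrow> (\<forall>y'. le y y' \<longrightarrow> forces_seq le R V (Seq S P PI PB) y')"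
      proof (intro allI impI)
        fix y y' assume "R x y" "le y y'"
        then obtain x' where "le x x'" "R x' y'" using BC by blast
        then show "forces_seq le R V (Seq S P PI PB) y'" using True by blast
      qed
      then have "\<forall>y. R x y \<longrightarrow> forces_seq le R V (Seq L TD (add_mset (Seq S P PI PB) TI) TB) y" by auto
      then show ?thesis by simp
    next
      case False
      then show ?thesis using h unfolding fs_addI fs_addB fs_empty simp_thms by blast
    qed
  qed
  then show ?case by (rule step1[OF _ inter_bc.IH])
qed

end

theorem theorem3p1:
  fixes S :: "'a seq" and W :: "'w set" and le R :: "'w \<Rightarrow> 'w \<Rightarrow> bool" and V :: "'w \<Rightarrow> 'a set"
  assumes "provable S" and "bimodel W le R V" and "w \<in> W"
  shows "forces_seq le R V S w"
  using sound[OF assms(2) assms(1)] assms(3) by blast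

end
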